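(* Let $D,D'$ be minimal abstract storage devices. Then $D\equiv D'$ if and only if there exist bijections $\phi:\mathcal{S}_D\to\mathcal{S}_{D'}$ and $\alpha:\mathcal{P}_D\to\mathcal{P}_{D'}$ such that $\pi=\alpha(\pi)\circ\phi$ for all $\pi\in\mathcal{P}_D$ (equivalently, $\pi'=\alpha^{-1}(\pi')\circ\phi^{-1}$ for all $\pi'\in\mathcal{P}_{D'}$).
   Context: An abstract storage device (ASD) is a pair $D=(\mathcal{S}_D,\mathcal{P}_D)$, $\mathcal{S}_D$ a finite set and $\mathcal{P}_D$ a finite family of partitions of $\mathcal{S}_D$. For a partition $\pi$ of $\mathcal{S}'$ and $\phi:\mathcal{S}\to\mathcal{S}'$, $\pi\circ\phi$ is the partition of $\mathcal{S}$ with $x,y$ in the same block iff $\phi(x),\phi(y)$ are in the same block of $\pi$; $\pi\preceq\rho$ means every block of $\pi$ lies in a block of $\rho$. $D\le D'$ means there exist $\phi:\mathcal{S}_D\to\mathcal{S}_{D'}$, $\alpha:\mathcal{P}_D\to\mathcal{P}_{D'}$ with $\alpha(\pi)\circ\phi\preceq\pi$ for all $\pi\in\mathcal{P}_D$; $D\equiv D'$ means $D\le D'$ and $D'\le D$. $D$ is minimal if there is no $E\equiv D$ with $|\mathcal{S}_E|<|\mathcal{S}_D|$ and no $E\equiv D$ with $|\mathcal{P}_E|<|\mathcal{P}_D|$. *)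

theory Defs
  imports "HOL-Library.Disjoint_Sets"
begin

type_synonym 'a asd = "'a set \<times> 'a set set set"

definition states :: "'a asd \<Rightarrow> 'a set" where "states D = fst D"
definition parts :: "'a asd \<Rightarrow> 'a set set set" where "parts D = snd D"

definition is_asd :: "'a asd \<Rightarrow> bool" where
  "is_asd D \<longleftrightarrow> finite (states D) \<and> finite (parts D) \<and>
     (\<forall>\<pi>\<in>parts D. partition_on (states D) \<pi>)"

text \<open>Pullback pi o phi of a partition pi (of the codomain) along phi : S -> S':
x, y in the same block iff phi x, phi y in the same block of pi.\<close>
definition pullback :: "'a set \<Rightarrow> ('a \<Rightarrow> 'b) \<Rightarrow> 'b set set \<Rightarrow> 'a set set" where
  "pullback S \<phi> \<pi> = ((\<lambda>B. {x\<in>S. \<phi> x \<in> B}) ` \<pi>) - {{}}"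

definition refines :: "'a set set \<Rightarrow> 'a set set \<Rightarrow> bool" where
  "refines \<pi> \<rho> \<longleftrightarrow> (\<forall>B\<in>\<pi>. \<exists>C\<in>\<rho>. B \<subseteq> C)"

definition asd_le :: "'a asd \<Rightarrow> 'b asd \<Rightarrow> bool" where
  "asd_le D D' \<longleftrightarrow> (\<exists>\<phi> \<alpha>. \<phi> ` states D \<subseteq> states D' \<and> \<alpha> ` parts D \<subseteq> parts D' \<and>
      (\<forall>\<pi>\<in>parts D. refines (pullback (states D) \<phi> (\<alpha> \<pi>)) \<pi>))"

definition asd_equiv :: "'a asd \<Rightarrow> 'b asd \<Rightarrow> bool" where
  "asd_equiv D D' \<longleftrightarrow> asd_le D D' \<and> asd_le D' D"

text \<open>Minimality: quantification over all ASDs E is rendered by ASDs with states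
in nat; every finite ASD is isomorphic (hence equivalent, with equal sizes) to one
over nat, so this loses nothing.\<close>
definition asd_minimal :: "'a asd \<Rightarrow> bool" where
  "asd_minimal D \<longleftrightarrow>
     \<not> (\<exists>E :: nat asd. is_asd E \<and> asd_equiv E D \<and> card (states E) < card (states D)) \<and>
     \<not> (\<exists>E :: nat asd. is_asd E \<and> asd_equiv E D \<and> card (parts E) < card (parts D))"

end

theory Submission
  imports Defs
begin

lemma mem_pullbackE:
  assumes "X \<in> pullback S f \<sigma>"
  obtains B where "B \<in> \<sigma>" "X = {x\<in>S. f x\<in>B}" "X \<noteq> {}"
  using assms unfolding pullback_def by blast

lemma mem_pullbackI:
  assumes "B \<in> \<sigma>" "{x\<in>S. f x\<in>B} \<noteq> {}"
  shows "{x\<in>S. f x\<in>B} \<in> pullback S f \<sigma>"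
  using assms unfolding pullback_def by blast

lemma pullback_comp:
  assumes "f ` S \<subseteq> T"
  shows "pullback S f (pullback T g \<sigma>) = pullback S (g \<circ> f) \<sigma>"
proof (rule set_eqI)
  fix X
  show "X \<in> pullback S f (pullback T g \<sigma>) \<longleftrightarrow> X \<in> pullback S (g \<circ> f) \<sigma>"
  proof
    assume "X \<in> pullback S f (pullback T g \<sigma>)"
    then obtain C where C: "C \<in> pullback T g \<sigma>" "X = {x\<in>S. f x \<in> C}" "X \<noteq> {}"
      by (rule mem_pullbackE)
    from C(1) obtain B where B: "B \<in> \<sigma>" "C = {y\<in>T. g y \<in> B}" by (rule mem_pullbackE)
    have e: "{x\<in>S. f x \<in> C} = {x\<in>S. (g \<circ> f) x \<in> B}" unfolding B(2) using assms by auto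
    show "X \<in> pullback S (g \<circ> f) \<sigma>" unfolding C(2) e
      by (rule mem_pullbackI[OF B(1)]) (use C e in simp)
  next
    assume "X \<in> pullback S (g \<circ> f) \<sigma>"
    then obtain B where B: "B \<in> \<sigma>" "X = {x\<in>S. (g \<circ> f) x \<in> B}" "X \<noteq> {}"
      by (rule mem_pullbackE)
    then obtain x where x: "x \<in> S" "g (f x) \<in> B" by auto
    have ne: "{y\<in>T. g y \<in> B} \<noteq> {}" using x assms by auto
    have e: "{x\<in>S. (g \<circ> f) x \<in> B} = {x\<in>S. f x \<in> {y\<in>T. g y \<in> B}}" using assms by auto
    have m: "{y\<in>T. g y \<in> B} \<in> pullback T g \<sigma>" by (rule mem_pullbackI[OF B(1) ne])
    show "X \<in> pullback S f (pullback T g \<sigma>)" unfolding B(2) e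
      by (rule mem_pullbackI[OF m]) (use B e x assms in auto)
  qed
qed

lemma pullback_cong:
  assumes "\<And>x. x \<in> S \<Longrightarrow> f x = g x"
  shows "pullback S f \<sigma> = pullback S g \<sigma>"
proof -
  have "(\<lambda>B. {x\<in>S. f x \<in> B}) = (\<lambda>B. {x\<in>S. g x \<in> B})" using assms by auto
  thus ?thesis unfolding pullback_def by (rule arg_cong[where f="\<lambda>h. h ` \<sigma> - {{}}"])
qed

lemma refines_refl: "refines \<pi> \<pi>"
  unfolding refines_def by auto

lemma refines_trans: "refines a b \<Longrightarrow> refines b c \<Longrightarrow> refines a c"
  unfolding refines_def by (meson order_trans)

lemma refines_pullback_id: "refines (pullback S id \<sigma>) \<sigma>"
  unfolding refines_def
proof
  fix X assume "X \<in> pullback S id \<sigma>"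
  then obtain B where "B \<in> \<sigma>" "X = {x\<in>S. id x\<in>B}" by (rule mem_pullbackE)
  thus "\<exists>C\<in>\<sigma>. X \<subseteq> C" by auto
qed

lemma refines_pullback_mono:
  assumes "refines \<rho> \<sigma>"
  shows "refines (pullback S f \<rho>) (pullback S f \<sigma>)"
  unfolding refines_def
proof
  fix X assume "X \<in> pullback S f \<rho>"
  then obtain B where B: "B \<in> \<rho>" "X = {x\<in>S. f x \<in> B}" "X \<noteq> {}"
    by (rule mem_pullbackE)
  then obtain C where C: "C \<in> \<sigma>" "B \<subseteq> C" using assms unfolding refines_def by auto
  have sub: "X \<subseteq> {x\<in>S. f x \<in> C}" using B C by auto
  have "{x\<in>S. f x \<in> C} \<in> pullback S f \<sigma>"
    by (rule mem_pullbackI[OF C(1)]) (use sub B in auto)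
  with sub show "\<exists>C\<in>pullback S f \<sigma>. X \<subseteq> C" by blast
qed

lemma partition_pullback:
  assumes "partition_on S' \<sigma>" "f ` S \<subseteq> S'"
  shows "partition_on S (pullback S f \<sigma>)"
proof (rule partition_onI)
  show "\<Union> (pullback S f \<sigma>) = S"
  proof
    show "\<Union> (pullback S f \<sigma>) \<subseteq> S"
    proof
      fix x assume "x \<in> \<Union> (pullback S f \<sigma>)"
      then obtain X where "X \<in> pullback S f \<sigma>" "x \<in> X" by auto
      thus "x \<in> S" by (auto elim: mem_pullbackE)
    qed
    show "S \<subseteq> \<Union> (pullback S f \<sigma>)"
    proof
      fix x assume x: "x \<in> S"
      then have "f x \<in> S'" using assms by auto
      then obtain B where B: "B \<in> \<sigma>" "f x \<in> B" using assms(1) partition_onD1 by blast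
      have "{y\<in>S. f y \<in> B} \<in> pullback S f \<sigma>" by (rule mem_pullbackI[OF B(1)]) (use x B in auto)
      thus "x \<in> \<Union> (pullback S f \<sigma>)" by (rule UnionI) (use x B in auto)
    qed
  qed
  show "{} \<notin> pullback S f \<sigma>" by (auto elim: mem_pullbackE)
  fix p q assume pq: "p \<in> pullback S f \<sigma>" "q \<in> pullback S f \<sigma>" "p \<noteq> q"
  from pq(1) obtain B where B: "B \<in> \<sigma>" "p = {x\<in>S. f x \<in> B}" by (rule mem_pullbackE)
  from pq(2) obtain C where C: "C \<in> \<sigma>" "q = {x\<in>S. f x \<in> C}" by (rule mem_pullbackE)
  have "B \<noteq> C" using B C pq(3) by auto
  hence "disjnt B C" using partition_onD2[OF assms(1)] B C by (auto simp: pairwise_def)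
  thus "disjnt p q" unfolding B(2) C(2) disjnt_def by auto
qed

lemma red_comp:
  assumes "\<phi>1 ` SA \<subseteq> SB"
    "\<forall>\<pi>\<in>PA. refines (pullback SA \<phi>1 (\<alpha>1 \<pi>)) \<pi>"
    "\<forall>\<pi>\<in>PB. refines (pullback SB \<phi>2 (\<alpha>2 \<pi>)) \<pi>"
    "\<pi> \<in> PA" "\<alpha>1 \<pi> \<in> PB"
  shows "refines (pullback SA (\<phi>2 \<circ> \<phi>1) (\<alpha>2 (\<alpha>1 \<pi>))) \<pi>"
proof -
  have e: "pullback SA (\<phi>2 \<circ> \<phi>1) (\<alpha>2 (\<alpha>1 \<pi>)) = pullback SA \<phi>1 (pullback SB \<phi>2 (\<alpha>2 (\<alpha>1 \<pi>)))"
    by (rule pullback_comp[OF assms(1), symmetric])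
  have "refines (pullback SB \<phi>2 (\<alpha>2 (\<alpha>1 \<pi>))) (\<alpha>1 \<pi>)" using assms(3,5) by auto
  hence "refines (pullback SA \<phi>1 (pullback SB \<phi>2 (\<alpha>2 (\<alpha>1 \<pi>)))) (pullback SA \<phi>1 (\<alpha>1 \<pi>))"
    by (rule refines_pullback_mono)
  moreover have "refines (pullback SA \<phi>1 (\<alpha>1 \<pi>)) \<pi>" using assms(2,4) by auto
  ultimately show ?thesis unfolding e by (rule refines_trans)
qed

lemma asd_leE:
  assumes "asd_le D D'"
  obtains \<phi> \<alpha> where "\<phi> ` states D \<subseteq> states D'" "\<alpha> ` parts D \<subseteq> parts D'"
      "\<forall>\<pi>\<in>parts D. refines (pullback (states D) \<phi> (\<alpha> \<pi>)) \<pi>"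
  using assms unfolding asd_le_def by (elim exE conjE) (rule that)

lemma asd_leI:
  assumes "\<phi> ` states D \<subseteq> states D'" "\<alpha> ` parts D \<subseteq> parts D'"
      "\<forall>\<pi>\<in>parts D. refines (pullback (states D) \<phi> (\<alpha> \<pi>)) \<pi>"
  shows "asd_le D D'"
  unfolding asd_le_def by (rule exI[of _ \<phi>], rule exI[of _ \<alpha>]) (use assms in simp)

lemma asd_le_trans:
  assumes "asd_le A B" "asd_le B C" shows "asd_le A C"
proof -
  obtain \<phi>1 \<alpha>1 where 1: "\<phi>1 ` states A \<subseteq> states B" "\<alpha>1 ` parts A \<subseteq> parts B"
      "\<forall>\<pi>\<in>parts A. refines (pullback (states A) \<phi>1 (\<alpha>1 \<pi>)) \<pi>"
    using assms(1) by (rule asd_leE)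
  obtain \<phi>2 \<alpha>2 where 2: "\<phi>2 ` states B \<subseteq> states C" "\<alpha>2 ` parts B \<subseteq> parts C"
      "\<forall>\<pi>\<in>parts B. refines (pullback (states B) \<phi>2 (\<alpha>2 \<pi>)) \<pi>"
    using assms(2) by (rule asd_leE)
  have "(\<phi>2 \<circ> \<phi>1) ` states A \<subseteq> states C" using 1(1) 2(1) by (auto simp: image_subset_iff)
  moreover have "(\<alpha>2 \<circ> \<alpha>1) ` parts A \<subseteq> parts C" using 1(2) 2(2) by (auto simp: image_subset_iff)
  moreover have "\<forall>\<pi>\<in>parts A. refines (pullback (states A) (\<phi>2 \<circ> \<phi>1) ((\<alpha>2 \<circ> \<alpha>1) \<pi>)) \<pi>"
    using red_comp[OF 1(1) 1(3) 2(3)] 1(2) by auto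
  ultimately show ?thesis by (rule asd_leI)
qed


lemma part_sub: "partition_on S \<pi> \<Longrightarrow> B \<in> \<pi> \<Longrightarrow> B \<subseteq> S"
  by (auto simp: partition_on_def)

lemma part_uniq:
  assumes "partition_on S \<pi>" "C \<in> \<pi>" "C' \<in> \<pi>" "x \<in> C" "x \<in> C'"
  shows "C = C'"
  using partition_onD2[OF assms(1)] assms(2-5) by (auto simp: pairwise_def disjnt_def)

lemma part_ne: "partition_on S \<pi> \<Longrightarrow> B \<in> \<pi> \<Longrightarrow> B \<noteq> {}"
  by (auto simp: partition_on_def)

lemma part_cover:
  assumes "partition_on S \<pi>" "x \<in> S"
  obtains B where "B \<in> \<pi>" "x \<in> B"
  using assms by (auto simp: partition_on_def)

lemma part_finite: "partition_on S \<pi> \<Longrightarrow> finite S \<Longrightarrow> finite \<pi>"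
  by (meson finite_Pow_iff part_sub PowI subsetI finite_subset)

lemma refines_card:
  assumes rho: "partition_on S \<rho>" and pi: "partition_on S \<pi>" and r: "refines \<rho> \<pi>"
    and fin: "finite S"
  shows "card \<pi> \<le> card \<rho> \<and> (card \<pi> = card \<rho> \<longrightarrow> \<rho> = \<pi>)"
proof -
  have ex: "\<exists>B. B \<in> \<rho> \<and> B \<subseteq> C" if C: "C \<in> \<pi>" for C
  proof -
    obtain x where x: "x \<in> C" using part_ne[OF pi C] by auto
    have "x \<in> S" using part_sub[OF pi C] x by auto
    then obtain B where B: "B \<in> \<rho>" "x \<in> B" by (rule part_cover[OF rho])
    then obtain C' where C': "C' \<in> \<pi>" "B \<subseteq> C'" using r unfolding refines_def by blast
    have "C' = C" using part_uniq[OF pi C'(1) C] B C' x by auto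
    thus ?thesis using B C' by auto
  qed
  define h where "h C = (SOME B. B \<in> \<rho> \<and> B \<subseteq> C)" for C
  have h: "h C \<in> \<rho> \<and> h C \<subseteq> C" if "C \<in> \<pi>" for C
    unfolding h_def by (rule someI_ex[OF ex[OF that]])
  have inj: "inj_on h \<pi>"
  proof (rule inj_onI)
    fix C1 C2 assume c: "C1 \<in> \<pi>" "C2 \<in> \<pi>" "h C1 = h C2"
    obtain x where "x \<in> h C1" using part_ne[OF rho] h[OF c(1)] by blast
    thus "C1 = C2" using part_uniq[OF pi c(1,2)] h[OF c(1)] h[OF c(2)] c(3) by auto
  qed
  have sub: "h ` \<pi> \<subseteq> \<rho>" using h by auto
  have finr: "finite \<rho>" by (rule part_finite[OF rho fin])
  have c1: "card \<pi> = card (h ` \<pi>)" using card_image[OF inj] by simp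
  have le: "card \<pi> \<le> card \<rho>" unfolding c1 by (rule card_mono[OF finr sub])
  have "\<rho> = \<pi>" if eq: "card \<pi> = card \<rho>"
  proof -
    have img: "h ` \<pi> = \<rho>" using card_subset_eq[OF finr sub] c1 eq by simp
    have hC: "h C = C" if C: "C \<in> \<pi>" for C
    proof
      show "h C \<subseteq> C" using h[OF C] by auto
      show "C \<subseteq> h C"
      proof
        fix y assume y: "y \<in> C"
        have "y \<in> S" using part_sub[OF pi C] y by auto
        then obtain B where B: "B \<in> \<rho>" "y \<in> B" by (rule part_cover[OF rho])
        then obtain C'' where C'': "C'' \<in> \<pi>" "B = h C''" using img by auto
        have "C'' = C" using part_uniq[OF pi C''(1) C] h[OF C''(1)] B C'' y by auto
        thus "y \<in> h C" using B C'' by auto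
      qed
    qed
    have "h ` \<pi> = \<pi>" using hC by auto
    thus ?thesis using img by simp
  qed
  thus ?thesis using le by auto
qed

lemma card_pullback_bij:
  assumes b: "bij_betw \<phi> S S'" and p: "partition_on S' \<sigma>"
  shows "card (pullback S \<phi> \<sigma>) = card \<sigma>"
proof -
  let ?k = "\<lambda>B. {x\<in>S. \<phi> x \<in> B}"
  have img: "\<phi> ` ?k B = B" if B: "B \<in> \<sigma>" for B
  proof
    show "\<phi> ` ?k B \<subseteq> B" by auto
    show "B \<subseteq> \<phi> ` ?k B"
    proof
      fix y assume y: "y \<in> B"
      hence "y \<in> S'" using part_sub[OF p B] by auto
      then obtain x where "x \<in> S" "y = \<phi> x" using b unfolding bij_betw_def by auto
      thus "y \<in> \<phi> ` ?k B" using y by auto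
    qed
  qed
  have ne: "?k B \<noteq> {}" if B: "B \<in> \<sigma>" for B
    using img[OF B] part_ne[OF p B] by auto
  have eq: "pullback S \<phi> \<sigma> = ?k ` \<sigma>" unfolding pullback_def using ne by auto
  have "inj_on ?k \<sigma>"
  proof (rule inj_onI)
    fix B1 B2 assume "B1 \<in> \<sigma>" "B2 \<in> \<sigma>" "?k B1 = ?k B2"
    thus "B1 = B2" using img by metis
  qed
  thus ?thesis unfolding eq by (rule card_image)
qed



lemma states_pair[simp]: "states (S, P) = S" by (simp add: states_def)
lemma parts_pair[simp]: "parts (S, P) = P" by (simp add: parts_def)

lemma transport:
  fixes E :: "'c asd" and D :: "'a asd"
  assumes E: "is_asd E" and eq: "asd_equiv E D" and m: "asd_minimal D"
  shows "card (states D) \<le> card (states E) \<and> card (parts D) \<le> card (parts E)"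
proof -
  let ?S = "states E" and ?P = "parts E"
  have finS: "finite ?S" and finP: "finite ?P" and pp: "\<And>\<pi>. \<pi> \<in> ?P \<Longrightarrow> partition_on ?S \<pi>"
    using E unfolding is_asd_def by auto
  obtain g :: "'c \<Rightarrow> nat" where g: "inj_on g ?S"
    using finite_imp_inj_to_nat_seg[OF finS] by blast
  define G where "G = (\<lambda>\<pi>. (`) g ` \<pi>)"
  define E' :: "nat asd" where "E' = (g ` ?S, G ` ?P)"
  have sE': "states E' = g ` ?S" and pE': "parts E' = G ` ?P" unfolding E'_def by simp_all
  have Gpart: "partition_on (g ` ?S) (G \<pi>)" if \<pi>: "\<pi> \<in> ?P" for \<pi>
  proof -
    have "partition_on (g ` ?S) ((`) g ` \<pi> - {{}})" by (rule partition_on_inj_image[OF pp[OF \<pi>] g])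
    moreover have "(`) g ` \<pi> - {{}} = G \<pi>" unfolding G_def using part_ne[OF pp[OF \<pi>]] by auto
    ultimately show ?thesis by simp
  qed
  have isE': "is_asd E'" unfolding is_asd_def sE' pE' using finS finP Gpart by auto
  have injG: "inj_on G ?P"
  proof -
    have "inj_on (image g) (Pow ?S)" by (rule inj_on_image_Pow[OF g])
    hence "inj_on (image (image g)) (Pow (Pow ?S))" by (rule inj_on_image_Pow)
    moreover have "?P \<subseteq> Pow (Pow ?S)" using pp part_sub by blast
    ultimately show ?thesis unfolding G_def by (rule inj_on_subset)
  qed
  have cS: "card (states E') = card ?S" unfolding sE' by (rule card_image[OF g])
  have cP: "card (parts E') = card ?P" unfolding pE' by (rule card_image[OF injG])
  have le1: "asd_le E E'"
  proof (rule asd_leI[of g _ _ G])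
    show "g ` states E \<subseteq> states E'" unfolding sE' by simp
    show "G ` parts E \<subseteq> parts E'" unfolding pE' by simp
    show "\<forall>\<pi>\<in>parts E. refines (pullback (states E) g (G \<pi>)) \<pi>"
    proof
      fix \<pi> assume \<pi>: "\<pi> \<in> ?P"
      show "refines (pullback (states E) g (G \<pi>)) \<pi>" unfolding refines_def
      proof
        fix X assume "X \<in> pullback (states E) g (G \<pi>)"
        then obtain B' where B': "B' \<in> G \<pi>" "X = {x\<in>?S. g x \<in> B'}" by (rule mem_pullbackE)
        then obtain B where B: "B \<in> \<pi>" "B' = g ` B" unfolding G_def by auto
        have "B \<subseteq> ?S" by (rule part_sub[OF pp[OF \<pi>] B(1)])
        hence "X \<subseteq> B" using B B' g by (auto dest: inj_onD)
        thus "\<exists>C\<in>\<pi>. X \<subseteq> C" using B by auto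
      qed
    qed
  qed
  have le2: "asd_le E' E"
  proof (rule asd_leI[of "inv_into ?S g" _ _ "inv_into ?P G"])
    show "inv_into ?S g ` states E' \<subseteq> states E" unfolding sE' by (auto intro: inv_into_into)
    show "inv_into ?P G ` parts E' \<subseteq> parts E" unfolding pE' by (auto intro: inv_into_into)
    show "\<forall>\<rho>\<in>parts E'. refines (pullback (states E') (inv_into ?S g) (inv_into ?P G \<rho>)) \<rho>"
    proof
      fix \<rho> assume "\<rho> \<in> parts E'"
      then obtain \<pi> where \<pi>: "\<pi> \<in> ?P" "\<rho> = G \<pi>" unfolding pE' by auto
      have inv: "inv_into ?P G \<rho> = \<pi>" using \<pi> injG by (simp add: inv_into_f_f)
      show "refines (pullback (states E') (inv_into ?S g) (inv_into ?P G \<rho>)) \<rho>"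
        unfolding refines_def inv
      proof
        fix X assume "X \<in> pullback (states E') (inv_into ?S g) \<pi>"
        then obtain B where B: "B \<in> \<pi>" "X = {y\<in>g ` ?S. inv_into ?S g y \<in> B}"
          unfolding sE' by (rule mem_pullbackE)
        have "X \<subseteq> g ` B"
        proof
          fix y assume "y \<in> X"
          then obtain x where "x \<in> ?S" "y = g x" "inv_into ?S g y \<in> B" using B by auto
          thus "y \<in> g ` B" using g by (auto simp: inv_into_f_f)
        qed
        moreover have "g ` B \<in> \<rho>" using \<pi> B unfolding G_def by auto
        ultimately show "\<exists>C\<in>\<rho>. X \<subseteq> C" by auto
      qed
    qed
  qed
  have "asd_equiv E' D" using eq le1 le2 unfolding asd_equiv_def by (meson asd_le_trans)
  hence "\<not> card (states E') < card (states D)" "\<not> card (parts E') < card (parts D)"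
    using m isE' unfolding asd_minimal_def by blast+
  thus ?thesis using cS cP by linarith
qed

lemma min_self:
  assumes D: "is_asd D" and m: "asd_minimal D" and fS: "f ` states D \<subseteq> states D"
    and aP: "a ` parts D \<subseteq> parts D"
    and r: "\<forall>\<pi>\<in>parts D. refines (pullback (states D) f (a \<pi>)) \<pi>"
  shows "inj_on f (states D) \<and> inj_on a (parts D)"
proof -
  let ?S = "states D" and ?P = "parts D"
  have finS: "finite ?S" and finP: "finite ?P" and pp: "\<And>\<pi>. \<pi> \<in> ?P \<Longrightarrow> partition_on ?S \<pi>"
    using D unfolding is_asd_def by auto
  have ia: "inj_on a ?P"
  proof -
    define E where "E = (?S, a ` ?P)"
    have isE: "is_asd E" unfolding E_def is_asd_def using finS finP pp aP by auto
    have l1: "asd_le D E" by (rule asd_leI[of f _ _ a]) (use fS r in \<open>auto simp: E_def\<close>)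
    have l2: "asd_le E D" by (rule asd_leI[of id _ _ id]) (use aP in \<open>auto simp: E_def refines_pullback_id\<close>)
    have "card ?P \<le> card (a ` ?P)" using transport[OF isE _ m] l1 l2 unfolding asd_equiv_def E_def by simp
    hence "card (a ` ?P) = card ?P" using card_image_le[OF finP, of a] by linarith
    thus ?thesis using inj_on_iff_eq_card[OF finP] by blast
  qed
  have if_: "inj_on f ?S"
  proof -
    define T where "T = f ` ?S"
    have TS: "T \<subseteq> ?S" using fS T_def by simp
    define Q where "Q = (\<lambda>\<sigma>. pullback T id \<sigma>) ` (a ` ?P)"
    define E where "E = (T, Q)"
    have isE: "is_asd E" unfolding is_asd_def E_def
    proof (simp, intro conjI ballI)
      show "finite T" using TS finS finite_subset by auto
      show "finite Q" unfolding Q_def using finP by simp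
      fix \<rho> assume "\<rho> \<in> Q"
      then obtain \<pi> where \<pi>: "\<pi> \<in> ?P" "\<rho> = pullback T id (a \<pi>)" unfolding Q_def by auto
      have "partition_on ?S (a \<pi>)" using pp aP \<pi> by auto
      thus "partition_on T \<rho>" unfolding \<pi>(2) by (rule partition_pullback) (use TS in simp)
    qed
    have l1: "asd_le D E"
    proof (rule asd_leI[of f _ _ "\<lambda>\<pi>. pullback T id (a \<pi>)"])
      show "f ` states D \<subseteq> states E" unfolding E_def T_def by simp
      show "(\<lambda>\<pi>. pullback T id (a \<pi>)) ` parts D \<subseteq> parts E" unfolding E_def Q_def by auto
      show "\<forall>\<pi>\<in>parts D. refines (pullback (states D) f (pullback T id (a \<pi>))) \<pi>"
      proof
        fix \<pi> assume \<pi>: "\<pi> \<in> ?P"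
        have "pullback ?S f (pullback T id (a \<pi>)) = pullback ?S (id \<circ> f) (a \<pi>)"
          by (rule pullback_comp) (simp add: T_def)
        thus "refines (pullback (states D) f (pullback T id (a \<pi>))) \<pi>" using r \<pi> by simp
      qed
    qed
    define c where "c \<rho> = (SOME \<sigma>. \<sigma> \<in> a ` ?P \<and> \<rho> = pullback T id \<sigma>)" for \<rho>
    have c: "c \<rho> \<in> a ` ?P \<and> \<rho> = pullback T id (c \<rho>)" if "\<rho> \<in> Q" for \<rho>
      unfolding c_def by (rule someI_ex) (use that in \<open>auto simp: Q_def\<close>)
    have l2: "asd_le E D"
    proof (rule asd_leI[of id _ _ c])
      show "id ` states E \<subseteq> states D" using TS by (simp add: E_def)
      show "c ` parts E \<subseteq> parts D" using c aP by (auto simp: E_def)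
      show "\<forall>\<rho>\<in>parts E. refines (pullback (states E) id (c \<rho>)) \<rho>"
        using c by (auto simp: E_def refines_refl)
    qed
    have "card ?S \<le> card T" using transport[OF isE _ m] l1 l2 unfolding asd_equiv_def E_def by simp
    hence "card (f ` ?S) = card ?S" using card_image_le[OF finS, of f] unfolding T_def by linarith
    thus ?thesis using inj_on_iff_eq_card[OF finS] by blast
  qed
  show ?thesis using ia if_ by simp
qed



lemma bij_from_inj:
  assumes "inj_on f A" "f ` A \<subseteq> B" "inj_on g B" "g ` B \<subseteq> A" "finite A" "finite B"
  shows "bij_betw f A B"
proof -
  have "card A \<le> card B" by (rule card_inj_on_le[OF assms(1,2,6)])
  moreover have "card B \<le> card A" by (rule card_inj_on_le[OF assms(3,4,5)])
  ultimately have "card (f ` A) = card B" using card_image[OF assms(1)] by simp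
  hence "f ` A = B" using card_subset_eq[OF assms(6,2)] by simp
  thus ?thesis using assms(1) unfolding bij_betw_def by simp
qed

lemma half:
  assumes b\<phi>: "bij_betw \<phi> S S'" and b\<alpha>: "bij_betw \<alpha> P P'"
    and pP: "\<forall>\<pi>\<in>P. partition_on S \<pi>" and pP': "\<forall>\<pi>\<in>P'. partition_on S' \<pi>"
    and r: "\<forall>\<pi>\<in>P. refines (pullback S \<phi> (\<alpha> \<pi>)) \<pi>" and fS: "finite S"
  shows "\<forall>\<pi>\<in>P. card \<pi> \<le> card (\<alpha> \<pi>) \<and> (card \<pi> = card (\<alpha> \<pi>) \<longrightarrow> pullback S \<phi> (\<alpha> \<pi>) = \<pi>)"
    and "sum card P \<le> sum card P'"
proof -
  show 1: "\<forall>\<pi>\<in>P. card \<pi> \<le> card (\<alpha> \<pi>) \<and> (card \<pi> = card (\<alpha> \<pi>) \<longrightarrow> pullback S \<phi> (\<alpha> \<pi>) = \<pi>)"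
  proof
    fix \<pi> assume \<pi>: "\<pi> \<in> P"
    have a\<pi>: "\<alpha> \<pi> \<in> P'" using b\<alpha> \<pi> unfolding bij_betw_def by auto
    have pa: "partition_on S' (\<alpha> \<pi>)" using pP' a\<pi> by auto
    have sub: "\<phi> ` S \<subseteq> S'" using b\<phi> unfolding bij_betw_def by auto
    have "card \<pi> \<le> card (pullback S \<phi> (\<alpha> \<pi>)) \<and> (card \<pi> = card (pullback S \<phi> (\<alpha> \<pi>)) \<longrightarrow> pullback S \<phi> (\<alpha> \<pi>) = \<pi>)"
      by (rule refines_card[OF partition_pullback[OF pa sub]]) (use pP \<pi> r fS in auto)
    thus "card \<pi> \<le> card (\<alpha> \<pi>) \<and> (card \<pi> = card (\<alpha> \<pi>) \<longrightarrow> pullback S \<phi> (\<alpha> \<pi>) = \<pi>)"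
      using card_pullback_bij[OF b\<phi> pa] by simp
  qed
  have "sum card P \<le> sum (card \<circ> \<alpha>) P" by (rule sum_mono) (use 1 in auto)
  also have "\<dots> = sum card (\<alpha> ` P)" using sum.reindex[of \<alpha> P card] b\<alpha> unfolding bij_betw_def by simp
  also have "\<dots> = sum card P'" using b\<alpha> unfolding bij_betw_def by simp
  finally show "sum card P \<le> sum card P'" .
qed

theorem proposition2:
  fixes D :: "'a asd" and D' :: "'b asd"
  assumes "is_asd D" and "is_asd D'"
    and "asd_minimal D" and "asd_minimal D'"
  shows "asd_equiv D D' \<longleftrightarrow>
    (\<exists>\<phi> \<alpha>. bij_betw \<phi> (states D) (states D') \<and> bij_betw \<alpha> (parts D) (parts D') \<and>
       (\<forall>\<pi>\<in>parts D. \<pi> = pullback (states D) \<phi> (\<alpha> \<pi>)))"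
proof -
  let ?S = "states D" and ?P = "parts D" and ?S' = "states D'" and ?P' = "parts D'"
  have finS: "finite ?S" and finP: "finite ?P" and pP: "\<forall>\<pi>\<in>?P. partition_on ?S \<pi>"
    using assms(1) unfolding is_asd_def by auto
  have finS': "finite ?S'" and finP': "finite ?P'" and pP': "\<forall>\<pi>\<in>?P'. partition_on ?S' \<pi>"
    using assms(2) unfolding is_asd_def by auto
  show ?thesis
  proof
    assume "asd_equiv D D'"
    hence l1: "asd_le D D'" and l2: "asd_le D' D" unfolding asd_equiv_def by auto
    obtain \<phi> \<alpha> where 1: "\<phi> ` ?S \<subseteq> ?S'" "\<alpha> ` ?P \<subseteq> ?P'"
        "\<forall>\<pi>\<in>?P. refines (pullback ?S \<phi> (\<alpha> \<pi>)) \<pi>"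
      using l1 by (rule asd_leE)
    obtain \<psi> \<beta> where 2: "\<psi> ` ?S' \<subseteq> ?S" "\<beta> ` ?P' \<subseteq> ?P"
        "\<forall>\<pi>\<in>?P'. refines (pullback ?S' \<psi> (\<beta> \<pi>)) \<pi>"
      using l2 by (rule asd_leE)
    have m1: "inj_on (\<psi> \<circ> \<phi>) ?S \<and> inj_on (\<beta> \<circ> \<alpha>) ?P"
    proof (rule min_self[OF assms(1,3)])
      show "(\<psi> \<circ> \<phi>) ` ?S \<subseteq> ?S" using 1 2 by (auto simp: image_subset_iff)
      show "(\<beta> \<circ> \<alpha>) ` ?P \<subseteq> ?P" using 1 2 by (auto simp: image_subset_iff)
      show "\<forall>\<pi>\<in>?P. refines (pullback ?S (\<psi> \<circ> \<phi>) ((\<beta> \<circ> \<alpha>) \<pi>)) \<pi>"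
        using red_comp[OF 1(1) 1(3) 2(3)] 1(2) by auto
    qed
    have m2: "inj_on (\<phi> \<circ> \<psi>) ?S' \<and> inj_on (\<alpha> \<circ> \<beta>) ?P'"
    proof (rule min_self[OF assms(2,4)])
      show "(\<phi> \<circ> \<psi>) ` ?S' \<subseteq> ?S'" using 1 2 by (auto simp: image_subset_iff)
      show "(\<alpha> \<circ> \<beta>) ` ?P' \<subseteq> ?P'" using 1 2 by (auto simp: image_subset_iff)
      show "\<forall>\<pi>\<in>?P'. refines (pullback ?S' (\<phi> \<circ> \<psi>) ((\<alpha> \<circ> \<beta>) \<pi>)) \<pi>"
        using red_comp[OF 2(1) 2(3) 1(3)] 2(2) by auto
    qed
    have i\<phi>: "inj_on \<phi> ?S" and i\<alpha>: "inj_on \<alpha> ?P" using m1 inj_on_imageI2 by blast+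
    have i\<psi>: "inj_on \<psi> ?S'" and i\<beta>: "inj_on \<beta> ?P'" using m2 inj_on_imageI2 by blast+
    have b\<phi>: "bij_betw \<phi> ?S ?S'" by (rule bij_from_inj[OF i\<phi> 1(1) i\<psi> 2(1) finS finS'])
    have b\<alpha>: "bij_betw \<alpha> ?P ?P'" by (rule bij_from_inj[OF i\<alpha> 1(2) i\<beta> 2(2) finP finP'])
    have b\<psi>: "bij_betw \<psi> ?S' ?S" by (rule bij_from_inj[OF i\<psi> 2(1) i\<phi> 1(1) finS' finS])
    have b\<beta>: "bij_betw \<beta> ?P' ?P" by (rule bij_from_inj[OF i\<beta> 2(2) i\<alpha> 1(2) finP' finP])
    note h1 = half[OF b\<phi> b\<alpha> pP pP' 1(3) finS]
    note h2 = half[OF b\<psi> b\<beta> pP' pP 2(3) finS']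
    have eqs: "sum card ?P = sum (card \<circ> \<alpha>) ?P"
    proof -
      have "sum (card \<circ> \<alpha>) ?P = sum card ?P'"
        using sum.reindex[of \<alpha> ?P card] b\<alpha> unfolding bij_betw_def by simp
      thus ?thesis using h1(2) h2(2) by linarith
    qed
    have "\<forall>\<pi>\<in>?P. \<pi> = pullback ?S \<phi> (\<alpha> \<pi>)"
    proof
      fix \<pi> assume \<pi>: "\<pi> \<in> ?P"
      have "card \<pi> = (card \<circ> \<alpha>) \<pi>"
        by (rule sum_mono_inv[OF eqs _ \<pi> finP]) (use h1(1) in auto)
      thus "\<pi> = pullback ?S \<phi> (\<alpha> \<pi>)" using h1(1) \<pi> by auto
    qed
    thus "\<exists>\<phi> \<alpha>. bij_betw \<phi> ?S ?S' \<and> bij_betw \<alpha> ?P ?P' \<and> (\<forall>\<pi>\<in>?P. \<pi> = pullback ?S \<phi> (\<alpha> \<pi>))"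
      using b\<phi> b\<alpha> by blast
  next
    assume "\<exists>\<phi> \<alpha>. bij_betw \<phi> ?S ?S' \<and> bij_betw \<alpha> ?P ?P' \<and> (\<forall>\<pi>\<in>?P. \<pi> = pullback ?S \<phi> (\<alpha> \<pi>))"
    then obtain \<phi> \<alpha> where b\<phi>: "bij_betw \<phi> ?S ?S'" and b\<alpha>: "bij_betw \<alpha> ?P ?P'"
      and e: "\<forall>\<pi>\<in>?P. \<pi> = pullback ?S \<phi> (\<alpha> \<pi>)" by blast
    have l1: "asd_le D D'"
    proof (rule asd_leI[of \<phi> _ _ \<alpha>])
      show "\<phi> ` ?S \<subseteq> ?S'" using b\<phi> unfolding bij_betw_def by simp
      show "\<alpha> ` ?P \<subseteq> ?P'" using b\<alpha> unfolding bij_betw_def by simp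
      show "\<forall>\<pi>\<in>?P. refines (pullback ?S \<phi> (\<alpha> \<pi>)) \<pi>" using e refines_refl by metis
    qed
    let ?\<phi>' = "inv_into ?S \<phi>" and ?\<alpha>' = "inv_into ?P \<alpha>"
    have l2: "asd_le D' D"
    proof (rule asd_leI[of ?\<phi>' _ _ ?\<alpha>'])
      show "?\<phi>' ` ?S' \<subseteq> ?S" using b\<phi> unfolding bij_betw_def by (auto intro: inv_into_into)
      show "?\<alpha>' ` ?P' \<subseteq> ?P" using b\<alpha> unfolding bij_betw_def by (auto intro: inv_into_into)
      show "\<forall>\<pi>'\<in>?P'. refines (pullback ?S' ?\<phi>' (?\<alpha>' \<pi>')) \<pi>'"
      proof
        fix \<pi>' assume \<pi>': "\<pi>' \<in> ?P'"
        have in1: "?\<alpha>' \<pi>' \<in> ?P" using b\<alpha> \<pi>' unfolding bij_betw_def by (auto intro: inv_into_into)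
        have a1: "\<alpha> (?\<alpha>' \<pi>') = \<pi>'" using b\<alpha> \<pi>' unfolding bij_betw_def by (metis f_inv_into_f)
        have "?\<alpha>' \<pi>' = pullback ?S \<phi> \<pi>'" using e in1 a1 by metis
        have sub: "?\<phi>' ` ?S' \<subseteq> ?S" using b\<phi> unfolding bij_betw_def by (auto intro: inv_into_into)
        have "pullback ?S' ?\<phi>' (?\<alpha>' \<pi>') = pullback ?S' (\<phi> \<circ> ?\<phi>') \<pi>'"
          unfolding \<open>?\<alpha>' \<pi>' = pullback ?S \<phi> \<pi>'\<close> by (rule pullback_comp[OF sub])
        also have "\<dots> = pullback ?S' id \<pi>'"
          by (rule pullback_cong) (use b\<phi> in \<open>auto simp: bij_betw_def intro: f_inv_into_f\<close>)
        finally show "refines (pullback ?S' ?\<phi>' (?\<alpha>' \<pi>')) \<pi>'" using refines_pullback_id by metis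
      qed
    qed
    show "asd_equiv D D'" unfolding asd_equiv_def using l1 l2 by simp
  qed
qed

end
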